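(* Let $n,r\geq1$, $\epsilon>0$, and let $t\mapsto(x_1(t),\ldots,x_r(t))$ be a continuous map $[0,\epsilon)\to(\mathbb R^n)^r$. For $I\subseteq\{1,\ldots,r\}$ and $t\in[0,\epsilon)$, let $F_I(t)$ be the convex hull of $\{x_i(t): i\in I\}$, and $P(t)=F_{\{1,\ldots,r\}}(t)$. Assume that for every $t\in(0,\epsilon)$ the points $x_i(t)$ are pairwise distinct vertices of $P(t)$, and that whenever $F_I(t)$ is a face of $P(t)$ of dimension $k$ for some $t\in(0,\epsilon)$, then $F_I(t)$ is a face of $P(t)$ of dimension $k$ for all $t\in(0,\epsilon)$. Suppose moreover that the directions of the edges of $P(t)$ are constant for $t\in(0,\epsilon)$, i.e. if $F_I(t)$ with $|I|=2$ is an edge of $P(t)$, then $F_I(t')$ and $F_I(t'')$ are parallel for all $t',t''\in(0,\epsilon)$. Then for every $k$-dimensional face $F$ of $P(0)$ there exists $I$ such that $F_I(t)$ is a $k$-dimensional face of $P(t)$ for $t\in(0,\epsilon)$ and $F_I(0)=F$. *)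

theory Defs
  imports "HOL-Analysis.Analysis"
begin

definition conv_pts :: "(nat \<Rightarrow> real \<Rightarrow> 'a::euclidean_space) \<Rightarrow> nat set \<Rightarrow> real \<Rightarrow> 'a set" where
  "conv_pts x I t = convex hull ((\<lambda>i. x i t) ` I)"

definition parallel_sets :: "'a::real_vector set \<Rightarrow> 'a set \<Rightarrow> bool" where
  "parallel_sets S T \<longleftrightarrow> (\<exists>v. affine hull S = (\<lambda>y. v + y) ` (affine hull T))"

end

theory Submission
  imports Defs
begin


lemma hull_le:
  fixes c :: "'a::euclidean_space"
  assumes "\<forall>y\<in>X. c \<bullet> y \<le> m" "z \<in> convex hull X"
  shows "c \<bullet> z \<le> m"
proof -
  have "convex hull X \<subseteq> {y. c \<bullet> y \<le> m}"
    using assms(1) by (intro hull_minimal) (auto simp: convex_halfspace_le)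
  then show ?thesis using assms(2) by auto
qed

lemma hull_eq:
  fixes c :: "'a::euclidean_space"
  assumes "\<forall>y\<in>X. c \<bullet> y = m" "z \<in> convex hull X"
  shows "c \<bullet> z = m"
proof -
  have "convex hull X \<subseteq> {y. c \<bullet> y = m}"
    using assms(1) by (intro hull_minimal) (auto simp: convex_hyperplane)
  then show ?thesis using assms(2) by auto
qed



lemma hyper_face:
  fixes c :: "'a::euclidean_space"
  assumes "finite X" "\<forall>y\<in>X. c \<bullet> y \<le> m"
  shows "convex hull X \<inter> {y. c \<bullet> y = m} = convex hull {y\<in>X. c \<bullet> y = m}"
    and "(convex hull X \<inter> {y. c \<bullet> y = m}) face_of convex hull X"
proof -
  have le: "c \<bullet> y \<le> m" if "y \<in> convex hull X" for y
    using hull_le[OF assms(2) that] .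
  show F: "(convex hull X \<inter> {y. c \<bullet> y = m}) face_of convex hull X"
    by (rule face_of_Int_supporting_hyperplane_le[OF convex_convex_hull le])
  obtain S' where S': "S' \<subseteq> X" "convex hull X \<inter> {y. c \<bullet> y = m} = convex hull S'"
    using face_of_convex_hull_subset[OF finite_imp_compact[OF assms(1)] F] by blast
  have "S' \<subseteq> convex hull S'" by (rule hull_subset)
  then have "S' \<subseteq> {y\<in>X. c \<bullet> y = m}"
    using S' by auto
  then have "convex hull S' \<subseteq> convex hull {y\<in>X. c \<bullet> y = m}"
    by (rule hull_mono)
  then have 1: "convex hull X \<inter> {y. c \<bullet> y = m} \<subseteq> convex hull {y\<in>X. c \<bullet> y = m}"
    using S'(2) by simp
  have 2: "convex hull {y\<in>X. c \<bullet> y = m} \<subseteq> convex hull X"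
    by (rule hull_mono) auto
  have 3: "c \<bullet> z = m" if "z \<in> convex hull {y\<in>X. c \<bullet> y = m}" for z
    by (rule hull_eq[OF _ that]) auto
  show "convex hull X \<inter> {y. c \<bullet> y = m} = convex hull {y\<in>X. c \<bullet> y = m}"
    using 1 2 3 by blast
qed



lemma par_const:
  fixes c :: "'a::euclidean_space"
  assumes "parallel_sets A B" "\<forall>y\<in>B. c \<bullet> y = m" "y \<in> A" "z \<in> A"
  shows "c \<bullet> y = c \<bullet> z"
proof -
  obtain v where v: "affine hull A = (\<lambda>y. v + y) ` (affine hull B)"
    using assms(1) unfolding parallel_sets_def by blast
  have hb: "affine hull B \<subseteq> {y. c \<bullet> y = m}"
    using assms(2) by (intro hull_minimal) (auto simp: affine_hyperplane)
  have "y \<in> affine hull A" "z \<in> affine hull A" using assms(3,4) by (simp_all add: hull_inc)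
  then obtain y' z' where "y' \<in> affine hull B" "z' \<in> affine hull B" "y = v + y'" "z = v + z'"
    using v by auto
  then show ?thesis using hb by (auto simp: inner_add_right)
qed



lemma LA:
  fixes A B :: "'a::euclidean_space set"
  assumes "A \<noteq> {}"
    and H: "\<And>u. (\<forall>y\<in>A. \<forall>z\<in>A. u \<bullet> y = u \<bullet> z) \<Longrightarrow> (\<forall>y\<in>B. \<forall>z\<in>B. u \<bullet> y = u \<bullet> z)"
  shows "aff_dim B \<le> aff_dim A"
proof (cases "B = {}")
  case True then show ?thesis using aff_dim_geq[of A] by simp
next
  case False
  obtain a where a: "a \<in> A" using assms(1) by blast
  obtain b where b: "b \<in> B" using False by blast
  let ?W = "span ((+) (- a) ` A)"
  have sub: "(+) (- b) ` B \<subseteq> ?W"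
  proof
    fix w assume "w \<in> (+) (- b) ` B"
    then obtain y where y: "y \<in> B" "w = - b + y" by blast
    obtain p z where p: "p \<in> ?W" and z: "\<And>w. w \<in> ?W \<Longrightarrow> orthogonal z w" and wpz: "w = p + z"
      using orthogonal_subspace_decomp_exists[of "(+) (- a) ` A" w] by blast
    have "\<forall>y'\<in>A. \<forall>z'\<in>A. z \<bullet> y' = z \<bullet> z'"
    proof (intro ballI)
      fix y' z' assume "y' \<in> A" "z' \<in> A"
      then have "- a + y' \<in> (+) (- a) ` A" "- a + z' \<in> (+) (- a) ` A" by auto
      then have "orthogonal z (- a + y')" "orthogonal z (- a + z')"
        using z span_base by blast+
      then show "z \<bullet> y' = z \<bullet> z'" by (simp add: orthogonal_def inner_add_right inner_diff_right)
    qed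
    then have hB: "\<forall>y\<in>B. \<forall>z'\<in>B. z \<bullet> y = z \<bullet> z'" by (rule H)
    have "z \<bullet> y = z \<bullet> b" using hB y(1) b by blast
    then have "z \<bullet> w = 0" using y by (simp add: inner_add_right inner_diff_right)
    moreover have "z \<bullet> p = 0" using z[OF p] by (simp add: orthogonal_def)
    ultimately have "z \<bullet> z = 0" using wpz by (simp add: inner_add_right)
    then have "z = 0" by simp
    then show "w \<in> ?W" using p wpz by simp
  qed
  have "aff_dim B = int (dim ((+) (- b) ` B))"
    by (rule aff_dim_eq_dim) (rule hull_inc[OF b])
  also have "\<dots> \<le> int (dim ?W)" using dim_subset[OF sub] by simp
  also have "\<dots> = aff_dim A"
    using aff_dim_eq_dim[OF hull_inc[OF a]] by simp
  finally show ?thesis .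
qed




lemma edge_exists:
  fixes c :: "'a::euclidean_space"
  shows "polytope Q \<Longrightarrow> p \<in> Q \<Longrightarrow> q \<in> Q \<Longrightarrow> c \<bullet> p \<noteq> c \<bullet> q \<Longrightarrow>
     \<exists>a b. a \<noteq> b \<and> closed_segment a b face_of Q \<and> c \<bullet> a \<noteq> c \<bullet> b"
proof (induction "nat (aff_dim Q)" arbitrary: Q p q rule: less_induct)
  case less
  have cvx: "convex Q" and cpt: "compact Q"
    using less.prems polytope_imp_convex polytope_imp_compact by auto
  have pq: "p \<noteq> q" using less.prems by auto
  have ge1: "aff_dim Q \<ge> 1"
  proof (rule ccontr)
    assume "\<not> aff_dim Q \<ge> 1"
    moreover have "\<not> aff_dim Q < 0" using aff_dim_negative_iff[of Q] less.prems(2) by auto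
    ultimately have "aff_dim Q = 0" by linarith
    then obtain a where "Q = {a}" using aff_dim_eq_0 by blast
    then show False using pq less.prems by auto
  qed
  show ?case
  proof (cases "aff_dim Q = 1")
    case True
    obtain n where n: "n simplex Q" using polytope_lowdim_imp_simplex[OF less.prems(1)] True by auto
    then have "n = 1" using aff_dim_simplex[OF n] True by simp
    then obtain C where C: "\<not> affine_dependent C" "card C = 2" "Q = convex hull C"
      using n unfolding simplex_def by auto
    then obtain a b where ab: "a \<noteq> b" "C = {a, b}" by (meson card_2_iff)
    have Q: "Q = closed_segment a b" using C ab by (simp add: segment_convex_hull)
    have "c \<bullet> a \<noteq> c \<bullet> b"
    proof
      assume "c \<bullet> a = c \<bullet> b"
      then have "\<forall>y\<in>C. c \<bullet> y = c \<bullet> a" using ab by auto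
      then have "c \<bullet> p = c \<bullet> a" "c \<bullet> q = c \<bullet> a"
        using hull_eq[of C c "c \<bullet> a"] less.prems(2,3) C(3) by auto
      then show False using less.prems(4) by simp
    qed
    moreover have "closed_segment a b face_of Q" using Q cvx face_of_refl by metis
    ultimately show ?thesis using ab by blast
  next
    case dimne1: False
    show ?thesis
    proof (cases "\<exists>F y z. F face_of Q \<and> F \<noteq> Q \<and> y \<in> F \<and> z \<in> F \<and> c \<bullet> y \<noteq> c \<bullet> z")
      case True
      then obtain F y z where F: "F face_of Q" "F \<noteq> Q" "y \<in> F" "z \<in> F" "c \<bullet> y \<noteq> c \<bullet> z"
        by blast
      have "aff_dim F < aff_dim Q" using face_of_aff_dim_lt[OF cvx F(1,2)] .
      moreover have "\<not> aff_dim F < 0" using aff_dim_negative_iff[of F] F(3) by auto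
      ultimately have lt: "nat (aff_dim F) < nat (aff_dim Q)" using ge1 by simp
      have "polytope F" using face_of_polytope_polytope less.prems(1) F(1) by blast
      then obtain a b where "a \<noteq> b" "closed_segment a b face_of F" "c \<bullet> a \<noteq> c \<bullet> b"
        using less.hyps[OF lt] F by blast
      then show ?thesis using F(1) face_of_trans by blast
    next
      case False
      then have const: "\<And>F y z. F face_of Q \<Longrightarrow> F \<noteq> Q \<Longrightarrow> y \<in> F \<Longrightarrow> z \<in> F \<Longrightarrow> c \<bullet> y = c \<bullet> z"
        by blast
      let ?R = "rel_frontier Q"
      have conn: "connected ?R"
        using connected_sphere_gen[OF cvx compact_imp_bounded[OF cpt] dimne1] .
      have Req: "?R = \<Union> {F. F face_of Q \<and> F \<noteq> Q}"
        by (rule rel_frontier_of_polyhedron_alt[OF polytope_imp_polyhedron[OF less.prems(1)]])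
      have fin: "finite {F. F face_of Q \<and> F \<noteq> Q}"
        using finite_polytope_faces[OF less.prems(1)] by (rule finite_subset[rotated]) auto
      have sing: "\<exists>v. (\<lambda>y. c \<bullet> y) ` F \<subseteq> {v}" if "F face_of Q" "F \<noteq> Q" for F
      proof (cases "F = {}")
        case True then show ?thesis by auto
      next
        case False
        then obtain y0 where "y0 \<in> F" by blast
        then show ?thesis using const[OF that] by blast
      qed
      have "finite ((\<lambda>y. c \<bullet> y) ` ?R)"
      proof -
        have "(\<lambda>y. c \<bullet> y) ` ?R = (\<Union>F\<in>{F. F face_of Q \<and> F \<noteq> Q}. (\<lambda>y. c \<bullet> y) ` F)"
          using Req by auto
        moreover have "finite ((\<lambda>y. c \<bullet> y) ` F)" if F1: "F face_of Q" "F \<noteq> Q" for F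
        proof -
          obtain v where "(\<lambda>y. c \<bullet> y) ` F \<subseteq> {v}" using sing[OF F1] by blast
          then show ?thesis by (rule finite_subset) simp
        qed
        ultimately show ?thesis using fin by (simp add: finite_UN)
      qed
      moreover have "connected ((\<lambda>y. c \<bullet> y) ` ?R)"
        by (intro connected_continuous_image[OF _ conn] continuous_intros)
      ultimately have "(\<lambda>y. c \<bullet> y) ` ?R = {} \<or> (\<exists>v. (\<lambda>y. c \<bullet> y) ` ?R = {v})"
        using connected_finite_iff_sing by blast
      then obtain v where v: "(\<lambda>y. c \<bullet> y) ` ?R \<subseteq> {v}"
        by blast
      let ?E = "{x. x extreme_point_of Q}"
      have QE: "Q = convex hull ?E" using Krein_Milman_Minkowski[OF cpt cvx] .
      have "?E \<subseteq> ?R"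
      proof
        fix e assume "e \<in> ?E"
        then have "{e} face_of Q" using face_of_singleton by blast
        moreover have "{e} \<noteq> Q" using pq less.prems by auto
        ultimately show "e \<in> ?R" using Req by blast
      qed
      then have "\<forall>y\<in>?E. c \<bullet> y = v" using v by blast
      moreover have "p \<in> convex hull ?E" "q \<in> convex hull ?E" using QE less.prems(2,3) by blast+
      ultimately have "c \<bullet> p = v" "c \<bullet> q = v" using hull_eq[of ?E c v] by blast+
      then show ?thesis using less.prems by simp
    qed
  qed
qed




lemma argmax_ex:
  fixes f :: "nat \<Rightarrow> real"
  assumes "finite I" "I \<noteq> {}"
  obtains k where "k \<in> I" "\<forall>l\<in>I. f l \<le> f k"
proof -
  have "Max (f ` I) \<in> f ` I" using assms by simp
  then obtain k where k: "k \<in> I" "f k = Max (f ` I)" by auto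
  have "\<forall>l\<in>I. f l \<le> f k" using k assms by simp
  then show ?thesis using that k(1) by blast
qed

lemma hull_ge:
  fixes c :: "'a::euclidean_space"
  assumes "\<forall>y\<in>X. m \<le> c \<bullet> y" "z \<in> convex hull X"
  shows "m \<le> c \<bullet> z"
proof -
  have "\<forall>y\<in>X. (- c) \<bullet> y \<le> - m" using assms(1) by simp
  from hull_le[OF this assms(2)] show ?thesis by simp
qed

lemma maxset_face:
  fixes x :: "nat \<Rightarrow> real \<Rightarrow> 'a::euclidean_space"
  assumes "finite I" "S = {k\<in>I. \<forall>l\<in>I. c \<bullet> x l t \<le> c \<bullet> x k t}" "S \<noteq> {}"
  shows "conv_pts x S t face_of conv_pts x I t"
proof -
  obtain i0 where i0: "i0 \<in> S" using assms(3) by blast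
  let ?m = "c \<bullet> x i0 t"
  let ?X = "(\<lambda>k. x k t) ` I"
  have le: "\<forall>y\<in>?X. c \<bullet> y \<le> ?m" using i0 assms(2) by auto
  have eq: "{y\<in>?X. c \<bullet> y = ?m} = (\<lambda>k. x k t) ` S"
  proof
    show "{y\<in>?X. c \<bullet> y = ?m} \<subseteq> (\<lambda>k. x k t) ` S"
    proof
      fix y assume "y \<in> {y\<in>?X. c \<bullet> y = ?m}"
      then obtain k where k: "k \<in> I" "y = x k t" "c \<bullet> x k t = ?m" by auto
      then have "k \<in> S" using le assms(2) by auto
      then show "y \<in> (\<lambda>k. x k t) ` S" using k by blast
    qed
  next
    show "(\<lambda>k. x k t) ` S \<subseteq> {y\<in>?X. c \<bullet> y = ?m}"
    proof
      fix y assume "y \<in> (\<lambda>k. x k t) ` S"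
      then obtain k where k: "k \<in> S" "y = x k t" by auto
      have "c \<bullet> x k t \<le> ?m" "?m \<le> c \<bullet> x k t" using k(1) i0 assms(2) by auto
      then show "y \<in> {y\<in>?X. c \<bullet> y = ?m}" using k assms(2) by auto
    qed
  qed
  have "convex hull ?X \<inter> {y. c \<bullet> y = ?m} face_of convex hull ?X"
    using hyper_face(2)[OF finite_imageI[OF assms(1)] le] .
  moreover have "convex hull ?X \<inter> {y. c \<bullet> y = ?m} = convex hull ((\<lambda>k. x k t) ` S)"
    using hyper_face(1)[OF finite_imageI[OF assms(1)] le] eq by simp
  ultimately show ?thesis unfolding conv_pts_def by simp
qed

locale pfam =
  fixes x :: "nat \<Rightarrow> real \<Rightarrow> 'a::euclidean_space"
    and r :: nat and \<epsilon> :: real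
  assumes eps_pos: "\<epsilon> > 0"
    and cont: "\<And>i. i \<in> {1..r} \<Longrightarrow> continuous_on {0..<\<epsilon>} (x i)"
    and faces_stable: "\<And>I k t t'. I \<subseteq> {1..r} \<Longrightarrow> t \<in> {0<..<\<epsilon>} \<Longrightarrow> t' \<in> {0<..<\<epsilon>} \<Longrightarrow>
                     conv_pts x I t face_of conv_pts x {1..r} t \<Longrightarrow> aff_dim (conv_pts x I t) = k \<Longrightarrow>
                     conv_pts x I t' face_of conv_pts x {1..r} t' \<and> aff_dim (conv_pts x I t') = k"
    and edges_parallel: "\<And>I t t' t''. I \<subseteq> {1..r} \<Longrightarrow> card I = 2 \<Longrightarrow>
                     t \<in> {0<..<\<epsilon>} \<Longrightarrow> t' \<in> {0<..<\<epsilon>} \<Longrightarrow> t'' \<in> {0<..<\<epsilon>} \<Longrightarrow>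
                     conv_pts x I t face_of conv_pts x {1..r} t \<Longrightarrow> aff_dim (conv_pts x I t) = 1 \<Longrightarrow>
                     parallel_sets (conv_pts x I t') (conv_pts x I t'')"
begin

lemma cont_inner: "k \<in> {1..r} \<Longrightarrow> continuous_on {0..<\<epsilon>} (\<lambda>t. c \<bullet> x k t)"
  using cont[of k] by (intro continuous_intros) auto

lemma cont_innerT: "k \<in> {1..r} \<Longrightarrow> continuous_on {0<..<\<epsilon>} (\<lambda>t. c \<bullet> x k t)"
  by (rule continuous_on_subset[OF cont_inner]) auto

lemma lim0:
  assumes "i \<in> {1..r}" "j \<in> {1..r}" "\<forall>t\<in>{0<..<\<epsilon>}. c \<bullet> x j t \<le> c \<bullet> x i t"
  shows "c \<bullet> x j 0 \<le> c \<bullet> x i 0"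
proof -
  let ?g = "\<lambda>t. c \<bullet> x i t - c \<bullet> x j t"
  have gc: "continuous_on {0..<\<epsilon>} ?g"
    using cont_inner[OF assms(1)] cont_inner[OF assms(2)] by (intro continuous_on_diff)
  have "(?g \<longlongrightarrow> ?g 0) (at 0 within {0..<\<epsilon>})"
    using gc eps_pos by (simp add: continuous_on_def)
  moreover have "at (0::real) within {0..<\<epsilon>} = at 0 within {0..}"
    using eps_pos by (intro at_within_nhd[of _ "{..<\<epsilon>}"]) auto
  ultimately have "(?g \<longlongrightarrow> ?g 0) (at_right 0)"
    by (simp add: at_within_Ici_at_right)
  moreover have "eventually (\<lambda>t. 0 \<le> ?g t) (at_right 0)"
    using eps_pos assms(3) unfolding eventually_at_right_field by (intro exI[of _ \<epsilon>]) auto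
  ultimately have "0 \<le> ?g 0"
    by (intro tendsto_lowerbound) auto
  then show ?thesis by simp
qed

end


context pfam begin

lemma constC:
  assumes I: "I \<subseteq> {1..r}" "\<forall>t\<in>{0<..<\<epsilon>}. conv_pts x I t face_of conv_pts x {1..r} t"
    and t0: "t0 \<in> {0<..<\<epsilon>}"
    and i: "i \<in> I" "\<forall>k\<in>I. c \<bullet> x k t0 \<le> c \<bullet> x i t0"
    and j: "j \<in> I" "\<forall>k\<in>I. c \<bullet> x k t0 \<le> c \<bullet> x j t0"
    and t: "t \<in> {0<..<\<epsilon>}"
  shows "c \<bullet> x i t = c \<bullet> x j t"
proof (rule ccontr)
  assume ne: "c \<bullet> x i t \<noteq> c \<bullet> x j t"
  have finI: "finite I" using I(1) finite_subset by blast
  define S where "S = {k\<in>I. \<forall>l\<in>I. c \<bullet> x l t0 \<le> c \<bullet> x k t0}"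
  have iS: "i \<in> S" and jS: "j \<in> S" using i j S_def by auto
  have mj: "c \<bullet> x j t0 = c \<bullet> x i t0" using i j by (meson antisym)
  have "conv_pts x S t0 face_of conv_pts x I t0"
    using maxset_face[where I=I and S=S and c=c and x=x and t=t0, OF finI S_def] iS by blast
  then have f0: "conv_pts x S t0 face_of conv_pts x {1..r} t0"
    using I(2) t0 face_of_trans by blast
  have SV: "S \<subseteq> {1..r}" using S_def I(1) by auto
  have fS: "conv_pts x S t face_of conv_pts x {1..r} t"
    using faces_stable[OF SV t0 t f0 refl] by blast
  let ?G = "conv_pts x S t"
  have finS: "finite S" using finI S_def by simp
  have polyG: "polytope ?G" unfolding conv_pts_def
    by (rule polytope_convex_hull) (simp add: finS)
  have "x i t \<in> ?G" "x j t \<in> ?G" unfolding conv_pts_def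
    using iS jS by (simp_all add: hull_inc)
  then obtain a b where ab: "a \<noteq> b" "closed_segment a b face_of ?G" "c \<bullet> a \<noteq> c \<bullet> b"
    using edge_exists[OF polyG _ _ ne] by blast
  have segP: "closed_segment a b face_of conv_pts x {1..r} t"
    using ab(2) fS face_of_trans by blast
  have "a extreme_point_of ?G" "b extreme_point_of ?G"
    using segment_face_of[OF ab(2)] by auto
  then have "a \<in> (\<lambda>k. x k t) ` S" "b \<in> (\<lambda>k. x k t) ` S"
    unfolding conv_pts_def by (simp_all add: extreme_point_of_convex_hull)
  then obtain p q where pq: "p \<in> S" "q \<in> S" "a = x p t" "b = x q t" by blast
  have "p \<noteq> q" using pq ab(1) by blast
  then have card2: "card {p, q} = 2" by simp
  have pqV: "{p, q} \<subseteq> {1..r}" using pq SV by blast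
  have cs: "conv_pts x {p, q} t = closed_segment a b"
    unfolding conv_pts_def using pq by (simp add: segment_convex_hull)
  have ad: "aff_dim (conv_pts x {p, q} t) = 1"
    using cs ab(1) by (simp add: segment_convex_hull aff_dim_convex_hull)
  have par: "parallel_sets (conv_pts x {p, q} t) (conv_pts x {p, q} t0)"
    using edges_parallel[OF pqV card2 t t t0] cs segP ad by simp
  have "c \<bullet> x p t0 = c \<bullet> x i t0" "c \<bullet> x q t0 = c \<bullet> x i t0"
    using pq(1,2) S_def i(2) iS by (auto intro: antisym)
  then have "\<forall>y\<in>(\<lambda>k. x k t0) ` {p, q}. c \<bullet> y = c \<bullet> x i t0" by auto
  then have "\<forall>y\<in>conv_pts x {p, q} t0. c \<bullet> y = c \<bullet> x i t0"
    unfolding conv_pts_def using hull_eq by blast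
  moreover have "a \<in> conv_pts x {p, q} t" "b \<in> conv_pts x {p, q} t" using cs by auto
  ultimately have "c \<bullet> a = c \<bullet> b" using par_const[OF par] by blast
  then show False using ab(3) by simp
qed

end


context pfam begin

lemma stableA:
  assumes I: "I \<subseteq> {1..r}" "\<forall>t\<in>{0<..<\<epsilon>}. conv_pts x I t face_of conv_pts x {1..r} t"
    and t0: "t0 \<in> {0<..<\<epsilon>}" and t: "t \<in> {0<..<\<epsilon>}"
    and i0: "i0 \<in> I" "\<forall>k\<in>I. c \<bullet> x k t0 \<le> c \<bullet> x i0 t0"
  shows "\<forall>k\<in>I. c \<bullet> x k t \<le> c \<bullet> x i0 t"
proof -
  let ?T = "{0<..<\<epsilon>}"
  have finI: "finite I" using I(1) finite_subset by blast
  define S0 where "S0 = {k\<in>I. \<forall>l\<in>I. c \<bullet> x l t0 \<le> c \<bullet> x k t0}"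
  define Z where "Z = {s\<in>?T. \<forall>k\<in>I. c \<bullet> x k s \<le> c \<bullet> x i0 s}"
  define Y where "Y = {s\<in>?T. \<forall>k\<in>I-S0. c \<bullet> x k s < c \<bullet> x i0 s}"
  have i0S: "i0 \<in> S0" using i0 S0_def by auto
  have ZY: "Z = Y"
  proof
    show "Z \<subseteq> Y"
    proof
      fix s assume s: "s \<in> Z"
      have "c \<bullet> x k s < c \<bullet> x i0 s" if k: "k \<in> I - S0" for k
      proof (rule ccontr)
        assume "\<not> c \<bullet> x k s < c \<bullet> x i0 s"
        then have eq: "c \<bullet> x k s = c \<bullet> x i0 s" using s k Z_def by force
        have sT: "s \<in> ?T" using s Z_def by auto
        have mi: "\<forall>l\<in>I. c \<bullet> x l s \<le> c \<bullet> x i0 s" using s Z_def by auto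
        then have mk: "\<forall>l\<in>I. c \<bullet> x l s \<le> c \<bullet> x k s" using eq by simp
        have "c \<bullet> x i0 t0 = c \<bullet> x k t0"
          using constC[OF I sT i0(1) mi _ mk t0] k by blast
        then have "k \<in> S0" using k i0(2) S0_def by auto
        then show False using k by blast
      qed
      then show "s \<in> Y" using s Z_def Y_def by auto
    qed
  next
    show "Y \<subseteq> Z"
    proof
      fix s assume s: "s \<in> Y"
      have sT: "s \<in> ?T" using s Y_def by auto
      obtain km where km: "km \<in> I" "\<forall>l\<in>I. c \<bullet> x l s \<le> c \<bullet> x km s"
        using argmax_ex[OF finI, of "\<lambda>k. c \<bullet> x k s"] i0(1) by blast
      have "km \<in> S0"
      proof (rule ccontr)
        assume "km \<notin> S0"
        then have "c \<bullet> x km s < c \<bullet> x i0 s" using s km(1) Y_def by auto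
        then show False using km(2) i0(1) by fastforce
      qed
      then have "\<forall>l\<in>I. c \<bullet> x l t0 \<le> c \<bullet> x km t0" using S0_def by auto
      then have "c \<bullet> x i0 s = c \<bullet> x km s"
        using constC[OF I t0 i0 km(1) _ sT] by blast
      then show "s \<in> Z" using km sT Z_def by auto
    qed
  qed
  have openY: "openin (top_of_set ?T) Y"
  proof -
    have "openin (top_of_set ?T) ((\<Inter>k\<in>I-S0. ?T \<inter> (\<lambda>s. c \<bullet> x i0 s - c \<bullet> x k s) -` {0<..}) \<inter> topspace (top_of_set ?T))"
    proof (rule openin_INT)
      show "finite (I - S0)" using finI by simp
      fix k assume "k \<in> I - S0"
      then have kV: "k \<in> {1..r}" using I(1) by auto
      have i0V: "i0 \<in> {1..r}" using I(1) i0(1) by auto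
      show "openin (top_of_set ?T) (?T \<inter> (\<lambda>s. c \<bullet> x i0 s - c \<bullet> x k s) -` {0<..})"
        by (rule continuous_openin_preimage_gen[OF continuous_on_diff[OF cont_innerT[OF i0V] cont_innerT[OF kV]]]) simp
    qed
    moreover have "(\<Inter>k\<in>I-S0. ?T \<inter> (\<lambda>s. c \<bullet> x i0 s - c \<bullet> x k s) -` {0<..}) \<inter> topspace (top_of_set ?T) = Y"
      unfolding Y_def by auto
    ultimately show ?thesis by simp
  qed
  have closedZ: "closedin (top_of_set ?T) Z"
  proof -
    have "closedin (top_of_set ?T) (\<Inter>k\<in>I. ?T \<inter> (\<lambda>s. c \<bullet> x i0 s - c \<bullet> x k s) -` {0..})"
    proof (rule closedin_INT)
      show "I \<noteq> {}" using i0 by auto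
      fix k assume "k \<in> I"
      then have kV: "k \<in> {1..r}" using I(1) by auto
      have i0V: "i0 \<in> {1..r}" using I(1) i0(1) by auto
      show "closedin (top_of_set ?T) (?T \<inter> (\<lambda>s. c \<bullet> x i0 s - c \<bullet> x k s) -` {0..})"
        by (rule continuous_closedin_preimage[OF continuous_on_diff[OF cont_innerT[OF i0V] cont_innerT[OF kV]]]) simp
    qed
    moreover have "(\<Inter>k\<in>I. ?T \<inter> (\<lambda>s. c \<bullet> x i0 s - c \<bullet> x k s) -` {0..}) = Z"
      unfolding Z_def using i0(1) by auto
    ultimately show ?thesis by simp
  qed
  have "t0 \<in> Z" using t0 i0 Z_def by auto
  then have "Z = ?T"
    using connected_clopen[of ?T] connected_Ioo openY closedZ ZY by blast
  then show ?thesis using t Z_def by auto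
qed

end


context pfam begin

lemma goodS:
  assumes I: "I \<subseteq> {1..r}" "\<forall>t\<in>{0<..<\<epsilon>}. conv_pts x I t face_of conv_pts x {1..r} t"
    and t0: "t0 \<in> {0<..<\<epsilon>}"
    and S_def: "S = {k\<in>I. \<forall>l\<in>I. c \<bullet> x l t0 \<le> c \<bullet> x k t0}" and Sne: "S \<noteq> {}"
  shows "\<forall>t\<in>{0<..<\<epsilon>}. conv_pts x S t face_of conv_pts x {1..r} t"
proof
  fix t assume t: "t \<in> {0<..<\<epsilon>}"
  have finI: "finite I" using I(1) finite_subset by blast
  have St: "S = {k\<in>I. \<forall>l\<in>I. c \<bullet> x l t \<le> c \<bullet> x k t}"
  proof
    show "S \<subseteq> {k\<in>I. \<forall>l\<in>I. c \<bullet> x l t \<le> c \<bullet> x k t}"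
    proof
      fix k assume k: "k \<in> S"
      then have "k \<in> I" "\<forall>l\<in>I. c \<bullet> x l t0 \<le> c \<bullet> x k t0" using S_def by auto
      then show "k \<in> {k\<in>I. \<forall>l\<in>I. c \<bullet> x l t \<le> c \<bullet> x k t}"
        using stableA[OF I t0 t] by blast
    qed
  next
    show "{k\<in>I. \<forall>l\<in>I. c \<bullet> x l t \<le> c \<bullet> x k t} \<subseteq> S"
    proof
      fix k assume k: "k \<in> {k\<in>I. \<forall>l\<in>I. c \<bullet> x l t \<le> c \<bullet> x k t}"
      then have "k \<in> I" "\<forall>l\<in>I. c \<bullet> x l t \<le> c \<bullet> x k t" by auto
      then have "\<forall>l\<in>I. c \<bullet> x l t0 \<le> c \<bullet> x k t0"
        using stableA[OF I t t0] by blast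
      then show "k \<in> S" using S_def \<open>k \<in> I\<close> by auto
    qed
  qed
  have "conv_pts x S t face_of conv_pts x I t"
    using maxset_face[where I=I and S=S and c=c and x=x and t=t, OF finI St Sne] .
  then show "conv_pts x S t face_of conv_pts x {1..r} t"
    using I(2) t face_of_trans by blast
qed

lemma lemmaB2:
  assumes I: "I \<subseteq> {1..r}" "\<forall>t\<in>{0<..<\<epsilon>}. conv_pts x I t face_of conv_pts x {1..r} t"
    and t0: "t0 \<in> {0<..<\<epsilon>}"
    and S_def: "S = {k\<in>I. \<forall>l\<in>I. c \<bullet> x l t0 \<le> c \<bullet> x k t0}"
    and y: "y \<in> conv_pts x S 0"
  shows "y \<in> conv_pts x I 0" "\<forall>j\<in>I. c \<bullet> x j 0 \<le> c \<bullet> y"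
proof -
  have SI: "S \<subseteq> I" using S_def by auto
  show "y \<in> conv_pts x I 0" using y SI unfolding conv_pts_def
    by (meson hull_mono image_mono subsetD)
  show "\<forall>j\<in>I. c \<bullet> x j 0 \<le> c \<bullet> y"
  proof
    fix j assume j: "j \<in> I"
    have "\<forall>z\<in>(\<lambda>k. x k 0) ` S. c \<bullet> x j 0 \<le> c \<bullet> z"
    proof
      fix z assume "z \<in> (\<lambda>k. x k 0) ` S"
      then obtain k where k: "k \<in> S" "z = x k 0" by blast
      have kI: "k \<in> I" "\<forall>l\<in>I. c \<bullet> x l t0 \<le> c \<bullet> x k t0" using k S_def by auto
      have "\<forall>t\<in>{0<..<\<epsilon>}. c \<bullet> x j t \<le> c \<bullet> x k t"
        using stableA[OF I t0 _ kI] j by blast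
      then show "c \<bullet> x j 0 \<le> c \<bullet> z"
        using lim0[of k j c] kI(1) j I(1) k(2) by blast
    qed
    then show "c \<bullet> x j 0 \<le> c \<bullet> y" using hull_ge y unfolding conv_pts_def by blast
  qed
qed

end


context pfam begin

lemma lemmaB:
  assumes I: "I \<subseteq> {1..r}" "\<forall>t\<in>{0<..<\<epsilon>}. conv_pts x I t face_of conv_pts x {1..r} t"
    and t0: "t0 \<in> {0<..<\<epsilon>}"
    and S_def: "S = {k\<in>I. \<forall>l\<in>I. c \<bullet> x l t0 \<le> c \<bullet> x k t0}" and Sne: "S \<noteq> {}"
    and y: "y \<in> conv_pts x I 0" and ymax: "\<forall>j\<in>I. c \<bullet> x j 0 \<le> c \<bullet> y"
  shows "y \<in> conv_pts x S 0"
proof -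
  have finI: "finite I" using I(1) finite_subset by blast
  have key: "\<exists>i\<in>S. u \<bullet> y \<le> u \<bullet> x i 0" for u
  proof -
    obtain i0 where i0: "i0 \<in> S" using Sne by blast
    have i0I: "i0 \<in> I" "\<forall>l\<in>I. c \<bullet> x l t0 \<le> c \<bullet> x i0 t0" using i0 S_def by auto
    have ev1: "\<forall>j\<in>I-S. eventually (\<lambda>s. (c + s *\<^sub>R u) \<bullet> x j t0 < (c + s *\<^sub>R u) \<bullet> x i0 t0) (at_right 0)"
    proof
      fix j assume j: "j \<in> I - S"
      then obtain l where l: "l \<in> I" "c \<bullet> x j t0 < c \<bullet> x l t0" using S_def by force
      have dpos: "0 < c \<bullet> x i0 t0 - c \<bullet> x j t0" using l i0I by fastforce
      let ?A = "c \<bullet> x i0 t0 - c \<bullet> x j t0" and ?B = "u \<bullet> x i0 t0 - u \<bullet> x j t0"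
      have "((\<lambda>s::real. ?A + s * ?B) \<longlongrightarrow> ?A + 0 * ?B) (at_right 0)"
        by (intro tendsto_intros)
      then have "((\<lambda>s::real. ?A + s * ?B) \<longlongrightarrow> ?A) (at_right 0)" by simp
      then have "eventually (\<lambda>s. 0 < ?A + s * ?B) (at_right 0)"
        using dpos by (rule order_tendstoD(1))
      then show "eventually (\<lambda>s. (c + s *\<^sub>R u) \<bullet> x j t0 < (c + s *\<^sub>R u) \<bullet> x i0 t0) (at_right 0)"
        by eventually_elim (simp add: inner_add_left algebra_simps)
    qed
    have "eventually (\<lambda>s. \<forall>j\<in>I-S. (c + s *\<^sub>R u) \<bullet> x j t0 < (c + s *\<^sub>R u) \<bullet> x i0 t0) (at_right 0)"
      using eventually_ball_finite[OF _ ev1] finI by simp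
    moreover have "eventually (\<lambda>s::real. 0 < s) (at_right 0)" by (rule eventually_at_right_less)
    ultimately have "eventually (\<lambda>s. 0 < s \<and> (\<forall>j\<in>I-S. (c + s *\<^sub>R u) \<bullet> x j t0 < (c + s *\<^sub>R u) \<bullet> x i0 t0)) (at_right 0)"
      by eventually_elim blast
    then obtain s where s: "0 < s" "\<forall>j\<in>I-S. (c + s *\<^sub>R u) \<bullet> x j t0 < (c + s *\<^sub>R u) \<bullet> x i0 t0"
      using eventually_happens'[OF trivial_limit_at_right_real] by blast
    define c' where "c' = c + s *\<^sub>R u"
    obtain i where i: "i \<in> I" "\<forall>l\<in>I. c' \<bullet> x l t0 \<le> c' \<bullet> x i t0"
      using argmax_ex[OF finI, of "\<lambda>k. c' \<bullet> x k t0"] i0I(1) by blast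
    have iS: "i \<in> S"
    proof (rule ccontr)
      assume "i \<notin> S"
      then have "c' \<bullet> x i t0 < c' \<bullet> x i0 t0" using s(2) i(1) c'_def by blast
      then show False using i(2) i0I(1) by fastforce
    qed
    have iV: "i \<in> {1..r}" using i(1) I(1) by auto
    have "\<forall>k\<in>I. c' \<bullet> x k 0 \<le> c' \<bullet> x i 0"
    proof
      fix k assume k: "k \<in> I"
      have "\<forall>t\<in>{0<..<\<epsilon>}. c' \<bullet> x k t \<le> c' \<bullet> x i t"
        using stableA[OF I t0 _ i] k by blast
      then show "c' \<bullet> x k 0 \<le> c' \<bullet> x i 0" using lim0[OF iV, of k c'] k I(1) by blast
    qed
    then have "\<forall>z\<in>(\<lambda>k. x k 0) ` I. c' \<bullet> z \<le> c' \<bullet> x i 0" by blast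
    then have 1: "c' \<bullet> y \<le> c' \<bullet> x i 0" using hull_le y unfolding conv_pts_def by blast
    have iSc: "\<forall>l\<in>I. c \<bullet> x l t0 \<le> c \<bullet> x i t0" using iS S_def by auto
    have "\<forall>k\<in>I. c \<bullet> x k 0 \<le> c \<bullet> x i 0"
    proof
      fix k assume k: "k \<in> I"
      have "\<forall>t\<in>{0<..<\<epsilon>}. c \<bullet> x k t \<le> c \<bullet> x i t"
        using stableA[OF I t0 _ i(1) iSc] k by blast
      then show "c \<bullet> x k 0 \<le> c \<bullet> x i 0" using lim0[OF iV, of k c] k I(1) by blast
    qed
    then have "\<forall>z\<in>(\<lambda>k. x k 0) ` I. c \<bullet> z \<le> c \<bullet> x i 0" by blast
    then have 2: "c \<bullet> y \<le> c \<bullet> x i 0" using hull_le y unfolding conv_pts_def by blast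
    have 3: "c \<bullet> x i 0 \<le> c \<bullet> y" using ymax i(1) by blast
    have "c \<bullet> y + s * (u \<bullet> y) \<le> c \<bullet> x i 0 + s * (u \<bullet> x i 0)"
      using 1 unfolding c'_def by (simp add: inner_add_left)
    then have "s * (u \<bullet> y) \<le> s * (u \<bullet> x i 0)" using 2 3 by linarith
    then have "u \<bullet> y \<le> u \<bullet> x i 0" using s(1) by simp
    then show ?thesis using iS by blast
  qed
  show ?thesis
  proof (rule ccontr)
    assume yn: "y \<notin> conv_pts x S 0"
    have "compact (conv_pts x S 0)" unfolding conv_pts_def
      using finI S_def by (intro finite_imp_compact_convex_hull) simp
    then have "closed (conv_pts x S 0)" by (rule compact_imp_closed)
    moreover have "convex (conv_pts x S 0)" unfolding conv_pts_def by simp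
    ultimately obtain a b where ab: "a \<bullet> y < b" "\<forall>z\<in>conv_pts x S 0. b < a \<bullet> z"
      using separating_hyperplane_closed_point[OF _ _ yn] by blast
    obtain i where i: "i \<in> S" "(- a) \<bullet> y \<le> (- a) \<bullet> x i 0" using key by blast
    have "x i 0 \<in> conv_pts x S 0" unfolding conv_pts_def using i(1) by (simp add: hull_inc)
    then have "b < a \<bullet> x i 0" using ab by blast
    then show False using i(2) ab(1) by simp
  qed
qed

end


context pfam begin

lemma descent:
  "card I = n \<Longrightarrow> I \<subseteq> {1..r} \<Longrightarrow> I \<noteq> {} \<Longrightarrow>
   (\<forall>t\<in>{0<..<\<epsilon>}. conv_pts x I t face_of conv_pts x {1..r} t) \<Longrightarrow>
   \<exists>I'\<subseteq>{1..r}. (\<forall>t\<in>{0<..<\<epsilon>}. conv_pts x I' t face_of conv_pts x {1..r} t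
        \<and> aff_dim (conv_pts x I' t) = aff_dim (conv_pts x I 0)) \<and> conv_pts x I' 0 = conv_pts x I 0"
proof (induction n arbitrary: I rule: less_induct)
  case (less n)
  note IV = less.prems(2) and Ine = less.prems(3) and If = less.prems(4)
  have finI: "finite I" using IV finite_subset by blast
  define t0 where "t0 = \<epsilon> / 2"
  have t0: "t0 \<in> {0<..<\<epsilon>}" using eps_pos t0_def by simp
  let ?A0 = "(\<lambda>k. x k 0) ` I" and ?At = "(\<lambda>k. x k t0) ` I"
  have A0ne: "?A0 \<noteq> {}" "?At \<noteq> {}" using Ine by auto
  have transfer: "(\<forall>y\<in>?A0. \<forall>z\<in>?A0. u \<bullet> y = u \<bullet> z)"
    if H: "\<forall>y\<in>?At. \<forall>z\<in>?At. u \<bullet> y = u \<bullet> z" for u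
  proof -
    have le: "u \<bullet> x l 0 \<le> u \<bullet> x k 0" if kl: "k \<in> I" "l \<in> I" for k l
    proof -
      have "\<forall>m\<in>I. u \<bullet> x m t0 \<le> u \<bullet> x k t0"
      proof
        fix m assume "m \<in> I"
        then have "x m t0 \<in> ?At" "x k t0 \<in> ?At" using kl by auto
        then have "u \<bullet> x m t0 = u \<bullet> x k t0" using H by blast
        then show "u \<bullet> x m t0 \<le> u \<bullet> x k t0" by simp
      qed
      then have "\<forall>t\<in>{0<..<\<epsilon>}. u \<bullet> x l t \<le> u \<bullet> x k t"
        using stableA[OF IV If t0 _ kl(1)] kl(2) by blast
      moreover have "k \<in> {1..r}" "l \<in> {1..r}" using kl IV by auto
      ultimately show ?thesis using lim0 by blast
    qed
    show ?thesis
    proof (intro ballI)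
      fix y z assume "y \<in> ?A0" "z \<in> ?A0"
      then obtain k l where "k \<in> I" "l \<in> I" "y = x k 0" "z = x l 0" by blast
      then show "u \<bullet> y = u \<bullet> z" using le by (meson antisym)
    qed
  qed
  have ad0: "aff_dim (conv_pts x I 0) = aff_dim ?A0" unfolding conv_pts_def by (rule aff_dim_convex_hull)
  have adt: "aff_dim (conv_pts x I t0) = aff_dim ?At" unfolding conv_pts_def by (rule aff_dim_convex_hull)
  have le: "aff_dim ?A0 \<le> aff_dim ?At"
    by (rule LA[OF A0ne(2) transfer])
  show ?case
  proof (cases "aff_dim ?A0 = aff_dim ?At")
    case True
    have "\<forall>t\<in>{0<..<\<epsilon>}. conv_pts x I t face_of conv_pts x {1..r} t
        \<and> aff_dim (conv_pts x I t) = aff_dim (conv_pts x I 0)"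
    proof
      fix t assume t: "t \<in> {0<..<\<epsilon>}"
      have "conv_pts x I t face_of conv_pts x {1..r} t \<and> aff_dim (conv_pts x I t) = aff_dim (conv_pts x I t0)"
        by (rule faces_stable[OF IV t0 t]) (use If t0 in auto)
      then show "conv_pts x I t face_of conv_pts x {1..r} t \<and> aff_dim (conv_pts x I t) = aff_dim (conv_pts x I 0)"
        using ad0 adt True by simp
    qed
    then show ?thesis using IV by (intro exI[of _ I] conjI) auto
  next
    case False
    then have lt: "aff_dim ?A0 < aff_dim ?At" using le by simp
    have "\<exists>u. (\<forall>y\<in>?A0. \<forall>z\<in>?A0. u \<bullet> y = u \<bullet> z) \<and> \<not> (\<forall>y\<in>?At. \<forall>z\<in>?At. u \<bullet> y = u \<bullet> z)"
    proof (rule ccontr)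
      assume nt: "\<not> ?thesis"
      have H: "(\<forall>y\<in>?At. \<forall>z\<in>?At. u \<bullet> y = u \<bullet> z)" if "(\<forall>y\<in>?A0. \<forall>z\<in>?A0. u \<bullet> y = u \<bullet> z)" for u
        using that nt by blast
      have "aff_dim ?At \<le> aff_dim ?A0" by (rule LA[OF A0ne(1) H])
      then show False using lt by simp
    qed
    then obtain u where u0: "\<forall>y\<in>?A0. \<forall>z\<in>?A0. u \<bullet> y = u \<bullet> z"
      and ut: "\<not> (\<forall>y\<in>?At. \<forall>z\<in>?At. u \<bullet> y = u \<bullet> z)" by blast
    define S where "S = {k\<in>I. \<forall>l\<in>I. u \<bullet> x l t0 \<le> u \<bullet> x k t0}"
    obtain i0 where i0: "i0 \<in> I" "\<forall>l\<in>I. u \<bullet> x l t0 \<le> u \<bullet> x i0 t0"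
      using argmax_ex[OF finI Ine, of "\<lambda>k. u \<bullet> x k t0"] by blast
    have Sne: "S \<noteq> {}" using i0 S_def by blast
    have SI: "S \<subseteq> I" using S_def by auto
    have "S \<noteq> I"
    proof
      assume SeqI: "S = I"
      have "\<forall>y\<in>?At. \<forall>z\<in>?At. u \<bullet> y = u \<bullet> z"
      proof (intro ballI)
        fix y z assume "y \<in> ?At" "z \<in> ?At"
        then obtain k l where kl: "k \<in> I" "l \<in> I" "y = x k t0" "z = x l t0" by blast
        then have "k \<in> S" "l \<in> S" using SeqI by auto
        then have "u \<bullet> x l t0 \<le> u \<bullet> x k t0" "u \<bullet> x k t0 \<le> u \<bullet> x l t0" using S_def kl by auto
        then show "u \<bullet> y = u \<bullet> z" using kl by simp
      qed
      then show False using ut by blast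
    qed
    then have cardlt: "card S < card I" using SI finI by (meson psubset_card_mono psubsetI)
    have SV: "S \<subseteq> {1..r}" using SI IV by blast
    have Sf: "\<forall>t\<in>{0<..<\<epsilon>}. conv_pts x S t face_of conv_pts x {1..r} t"
      using goodS[OF IV If t0 S_def Sne] .
    have eq0: "conv_pts x S 0 = conv_pts x I 0"
    proof
      show "conv_pts x S 0 \<subseteq> conv_pts x I 0"
        using lemmaB2(1)[OF IV If t0 S_def] by blast
    next
      show "conv_pts x I 0 \<subseteq> conv_pts x S 0"
      proof
        fix y assume y: "y \<in> conv_pts x I 0"
        obtain k0 where k0: "k0 \<in> I" using Ine by blast
        have cst: "\<forall>z\<in>?A0. u \<bullet> z = u \<bullet> x k0 0" using u0 k0 by blast
        then have uy: "u \<bullet> y = u \<bullet> x k0 0" using hull_eq y unfolding conv_pts_def by blast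
        have "\<forall>j\<in>I. u \<bullet> x j 0 \<le> u \<bullet> y" using cst uy by simp
        then show "y \<in> conv_pts x S 0"
          using lemmaB[OF IV If t0 S_def Sne y] by blast
      qed
    qed
    obtain I' where "I' \<subseteq> {1..r}" "\<forall>t\<in>{0<..<\<epsilon>}. conv_pts x I' t face_of conv_pts x {1..r} t
        \<and> aff_dim (conv_pts x I' t) = aff_dim (conv_pts x S 0)" "conv_pts x I' 0 = conv_pts x S 0"
      using less.IH[OF _ refl SV Sne Sf] cardlt less.prems(1) by metis
    then show ?thesis using eq0 by auto
  qed
qed

end



theorem proposition6p2:
  fixes x :: "nat \<Rightarrow> real \<Rightarrow> 'a::euclidean_space"
    and r :: nat and \<epsilon> :: real
  assumes r_pos: "r \<ge> 1"
    and eps_pos: "\<epsilon> > 0"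
    and cont: "\<And>i. i \<in> {1..r} \<Longrightarrow> continuous_on {0..<\<epsilon>} (x i)"
    and distinct: "\<And>t. t \<in> {0<..<\<epsilon>} \<Longrightarrow> inj_on (\<lambda>i. x i t) {1..r}"
    and vertices: "\<And>t i. t \<in> {0<..<\<epsilon>} \<Longrightarrow> i \<in> {1..r} \<Longrightarrow>
                     {x i t} face_of conv_pts x {1..r} t"
    and faces_stable: "\<And>I k t t'. I \<subseteq> {1..r} \<Longrightarrow> t \<in> {0<..<\<epsilon>} \<Longrightarrow> t' \<in> {0<..<\<epsilon>} \<Longrightarrow>
                     conv_pts x I t face_of conv_pts x {1..r} t \<Longrightarrow> aff_dim (conv_pts x I t) = k \<Longrightarrow>
                     conv_pts x I t' face_of conv_pts x {1..r} t' \<and> aff_dim (conv_pts x I t') = k"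
    and edges_parallel: "\<And>I t t' t''. I \<subseteq> {1..r} \<Longrightarrow> card I = 2 \<Longrightarrow>
                     t \<in> {0<..<\<epsilon>} \<Longrightarrow> t' \<in> {0<..<\<epsilon>} \<Longrightarrow> t'' \<in> {0<..<\<epsilon>} \<Longrightarrow>
                     conv_pts x I t face_of conv_pts x {1..r} t \<Longrightarrow> aff_dim (conv_pts x I t) = 1 \<Longrightarrow>
                     parallel_sets (conv_pts x I t') (conv_pts x I t'')"
  shows "\<forall>F k. F face_of conv_pts x {1..r} 0 \<and> aff_dim F = k \<longrightarrow>
           (\<exists>I \<subseteq> {1..r}. (\<forall>t \<in> {0<..<\<epsilon>}. conv_pts x I t face_of conv_pts x {1..r} t
                                           \<and> aff_dim (conv_pts x I t) = k)
                         \<and> conv_pts x I 0 = F)"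
proof -
  interpret pfam x r \<epsilon>
    by (intro pfam.intro) (fact eps_pos, fact cont, fact faces_stable, fact edges_parallel)
  show ?thesis
  proof (intro allI impI, elim conjE)
    fix F k assume F: "F face_of conv_pts x {1..r} 0" and k: "aff_dim F = k"
    show "\<exists>I \<subseteq> {1..r}. (\<forall>t \<in> {0<..<\<epsilon>}. conv_pts x I t face_of conv_pts x {1..r} t
                                           \<and> aff_dim (conv_pts x I t) = k)
                         \<and> conv_pts x I 0 = F"
    proof (cases "F = {}")
      case True
      have e: "conv_pts x {} t = {}" for t unfolding conv_pts_def by simp
      show ?thesis using True k e by (intro exI[of _ "{}"] conjI) auto
    next
      case False
      let ?P0 = "conv_pts x {1..r} 0"
      have poly: "polytope ?P0" unfolding conv_pts_def
        by (rule polytope_convex_hull) simp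
      have "F exposed_face_of ?P0"
        using exposed_face_of_polyhedron[OF polytope_imp_polyhedron[OF poly]] F by blast
      then obtain c b where cb: "?P0 \<subseteq> {y. c \<bullet> y \<le> b}" "F = ?P0 \<inter> {y. c \<bullet> y = b}"
        unfolding exposed_face_of_def by blast
      define t0 where "t0 = \<epsilon> / 2"
      have t0: "t0 \<in> {0<..<\<epsilon>}" using eps_pos t0_def by simp
      define S where "S = {k\<in>{1..r}. \<forall>l\<in>{1..r}. c \<bullet> x l t0 \<le> c \<bullet> x k t0}"
      have VV: "{1..r} \<subseteq> {1..r}" by simp
      have Vf: "\<forall>t\<in>{0<..<\<epsilon>}. conv_pts x {1..r} t face_of conv_pts x {1..r} t"
        unfolding conv_pts_def by (simp add: face_of_refl)
      have Vne: "{1..r} \<noteq> {}" using r_pos by simp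
      obtain i0 where i0: "i0 \<in> {1..r}" "\<forall>l\<in>{1..r}. c \<bullet> x l t0 \<le> c \<bullet> x i0 t0"
        using argmax_ex[OF finite_atLeastAtMost Vne, of "\<lambda>k. c \<bullet> x k t0"] by blast
      have Sne: "S \<noteq> {}" using i0 S_def by blast
      have SV: "S \<subseteq> {1..r}" using S_def by auto
      have Sf: "\<forall>t\<in>{0<..<\<epsilon>}. conv_pts x S t face_of conv_pts x {1..r} t"
        using goodS[OF VV Vf t0 S_def Sne] .
      have eqF: "conv_pts x S 0 = F"
      proof
        show "conv_pts x S 0 \<subseteq> F"
        proof
          fix y assume y: "y \<in> conv_pts x S 0"
          have yP: "y \<in> ?P0" and ymax: "\<forall>j\<in>{1..r}. c \<bullet> x j 0 \<le> c \<bullet> y"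
            using lemmaB2[OF VV Vf t0 S_def y] by auto
          obtain z where z: "z \<in> F" using False by blast
          have zP: "z \<in> ?P0" and zb: "c \<bullet> z = b" using z cb(2) by auto
          have "\<forall>w\<in>(\<lambda>k. x k 0) ` {1..r}. c \<bullet> w \<le> c \<bullet> y" using ymax by blast
          then have "c \<bullet> z \<le> c \<bullet> y" using hull_le zP unfolding conv_pts_def by blast
          moreover have "c \<bullet> y \<le> b" using yP cb(1) by blast
          ultimately show "y \<in> F" using zb yP cb(2) by simp
        qed
      next
        show "F \<subseteq> conv_pts x S 0"
        proof
          fix y assume y: "y \<in> F"
          have yP: "y \<in> ?P0" and yb: "c \<bullet> y = b" using y cb(2) by auto
          have "\<forall>j\<in>{1..r}. c \<bullet> x j 0 \<le> c \<bullet> y"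
          proof
            fix j assume j: "j \<in> {1..r}"
            have "x j 0 \<in> ?P0" unfolding conv_pts_def using j by (simp add: hull_inc)
            then show "c \<bullet> x j 0 \<le> c \<bullet> y" using cb(1) yb by blast
          qed
          then show "y \<in> conv_pts x S 0"
            using lemmaB[OF VV Vf t0 S_def Sne yP] by blast
        qed
      qed
      obtain I' where I': "I' \<subseteq> {1..r}" "\<forall>t\<in>{0<..<\<epsilon>}. conv_pts x I' t face_of conv_pts x {1..r} t
        \<and> aff_dim (conv_pts x I' t) = aff_dim (conv_pts x S 0)" "conv_pts x I' 0 = conv_pts x S 0"
        using descent[OF refl SV Sne Sf] by blast
      show ?thesis
        using I' eqF k by (intro exI[of _ I'] conjI) auto
    qed
  qed
qed


end
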